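(* Let $m_1,m_2\ge 1$ be integers with $\gcd(m_1,m_2)=1$, and let $a\ne b$ be complex numbers such that $T_{m_1}(a)=T_{m_1}(b)$ and $T_{m_2}(a)=T_{m_2}(b)$. Then $T_{m_1m_2}'(a)=T_{m_1m_2}'(b)=0$.
   Context: $T_n$ denotes the Chebyshev polynomial of the first kind of degree $n$, defined by $T_n(\cos\phi)=\cos(n\phi)$. *)

theory Defs
  imports "HOL-Computational_Algebra.Polynomial"
begin

text \<open>Chebyshev polynomials of the first kind, via the standard recurrence
  T_0 = 1, T_1 = X, T_(n+2) = 2 X T_(n+1) - T_n, which is equivalent to
  T_n(cos phi) = cos(n phi).\<close>
fun cheb_T :: "nat \<Rightarrow> complex poly" where
  "cheb_T 0 = 1"
| "cheb_T (Suc 0) = [:0, 1:]"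
| "cheb_T (Suc (Suc n)) = [:0, 2:] * cheb_T (Suc n) - cheb_T n"

end

theory Submission imports Defs begin
lemma inv_pow: "(x::complex) \<noteq> 0 \<Longrightarrow> x^k * inverse x ^ k = 1"
  by (metis power_mult_distrib right_inverse power_one)

lemma alg3:
  fixes p q r t :: complex
  assumes "p + q = r + t" "p*q = 1" "r*t = 1"
  shows "p*p - p*(r + t) + r*t = 0"
  using assms by algebra

lemma alg1:
  fixes u w p q :: complex
  assumes "u*w = 1"
  shows "(u+w)*(u*p+w*q) - (p+q) = u*(u*p)+w*(w*q)"
  using assms by algebra

lemma T_closed:
  assumes "u \<noteq> 0"
  shows "poly (cheb_T n) ((u + inverse u)/2) = (u^n + inverse u ^ n)/2"
proof (induction n rule: cheb_T.induct)
  case 1 then show ?case by simp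
next
  case 2 then show ?case by simp
next
  case (3 n)
  define x where "x = (u + inverse u)/2"
  have uw: "u * inverse u = 1" using assms by simp
  have "poly (cheb_T (Suc (Suc n))) x = 2*x*poly (cheb_T (Suc n)) x - poly (cheb_T n) x" by simp
  also have "\<dots> = ((u+inverse u)*(u*u^n+inverse u*inverse u^n) - (u^n+inverse u^n))/2"
    using 3 unfolding x_def by (simp add: field_simps)
  also have "\<dots> = (u^Suc (Suc n) + inverse u ^ Suc (Suc n))/2"
    unfolding alg1[OF uw] by simp
  finally show ?case unfolding x_def .
qed

lemma pderiv_rec: "pderiv (cheb_T (Suc (Suc n))) = [:2:] * cheb_T (Suc n) + [:0,2:] * pderiv (cheb_T (Suc n)) - pderiv (cheb_T n)"
  by (simp add: pderiv_mult pderiv_diff pderiv_pCons pderiv_smult)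

lemma alg2:
  fixes u w p q N :: complex
  assumes "u*w = 1"
  shows "(u-w)*(u*p+w*q) + (u+w)*((N+1)*(u*p-w*q)) - N*(p-q) = (N+2)*(u*(u*p)-w*(w*q))"
  using assms by algebra

lemma D_closed:
  assumes "u \<noteq> 0"
  shows "poly (pderiv (cheb_T n)) ((u + inverse u)/2) * (u - inverse u) = of_nat n * (u^n - inverse u ^ n)"
proof (induction n rule: cheb_T.induct)
  case 1 then show ?case by simp
next
  case 2 then show ?case by (simp add: pderiv_pCons)
next
  case (3 n)
  define x where "x = (u + inverse u)/2"
  have uw: "u * inverse u = 1" using assms by simp
  have T: "poly (cheb_T (Suc n)) x = (u^Suc n + inverse u ^ Suc n)/2"
    using T_closed assms unfolding x_def by blast
  have T2: "2 * poly (cheb_T (Suc n)) ((u+inverse u)/2) = u^Suc n + inverse u ^ Suc n"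
    using T unfolding x_def by (simp add: field_simps)
  have x2: "2*x = u + inverse u" unfolding x_def by simp
  have R: "poly (pderiv (cheb_T (Suc (Suc n)))) x = 2 * poly (cheb_T (Suc n)) x + 2*x * poly (pderiv (cheb_T (Suc n))) x - poly (pderiv (cheb_T n)) x"
    unfolding pderiv_rec by simp
  have "poly (pderiv (cheb_T (Suc (Suc n)))) x * (u - inverse u)
     = 2 * poly (cheb_T (Suc n)) x * (u - inverse u) + (u + inverse u) * (poly (pderiv (cheb_T (Suc n))) x * (u - inverse u))
       - poly (pderiv (cheb_T n)) x * (u - inverse u)"
    unfolding R x2[symmetric] by (simp add: algebra_simps)
  also have "\<dots> = (u-inverse u)*(u*u^n+inverse u*inverse u^n) + (u+inverse u)*((of_nat n+1)*(u*u^n-inverse u*inverse u^n)) - of_nat n*(u^n-inverse u^n)"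
    unfolding x_def 3 T2 by (simp add: algebra_simps)
  also have "\<dots> = of_nat (Suc (Suc n)) * (u^Suc (Suc n) - inverse u ^ Suc (Suc n))"
    unfolding alg2[OF uw] by (simp add: algebra_simps)
  finally show ?case unfolding x_def .
qed

lemma root1:
  fixes c :: complex
  assumes "coprime m1 m2" "m1 \<ge> 1" "c^m1 = 1" "c^m2 = 1"
  shows "c = 1"
proof -
  obtain x y where "m1 * x = m2 * y + gcd m1 m2" using bezout_nat[of m1 m2] assms(2) by auto
  then have e: "m1 * x = m2 * y + 1" using assms(1) by simp
  have "c = c^(m2*y) * c" using assms(4) by (simp add: power_mult)
  also have "\<dots> = c^(m1*x)" using e by (simp add: power_add)
  also have "\<dots> = 1" using assms(3) by (simp add: power_mult)
  finally show ?thesis .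
qed

lemma param:
  fixes a :: complex
  obtains u where "u \<noteq> 0" "a = (u + inverse u)/2"
proof -
  define s where "s = csqrt (a^2 - 1)"
  have s2: "s^2 = a^2 - 1" unfolding s_def by simp
  have p: "(a + s) * (a - s) = 1" using s2 by (simp add: algebra_simps power2_eq_square)
  then have nz: "a + s \<noteq> 0" by auto
  have "inverse (a + s) = a - s" using p by (metis inverse_unique)
  then show ?thesis using that[of "a+s"] nz by simp
qed

lemma split_eq:
  fixes u v :: complex
  assumes "u \<noteq> 0" "v \<noteq> 0"
    and "poly (cheb_T m) ((u + inverse u)/2) = poly (cheb_T m) ((v + inverse v)/2)"
  shows "u^m = v^m \<or> u^m = inverse v ^ m"
proof -
  have e0: "(u^m + inverse u ^ m)/2 = (v^m + inverse v ^ m)/2"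
    using assms T_closed[of u m] T_closed[of v m] by metis
  have h2: "\<And>t::complex. t = 2*(t/2)" by simp
  have e: "u^m + inverse u ^ m = v^m + inverse v ^ m"
    by (subst h2, subst (2) h2, rule arg_cong[OF e0])
  have uw: "u^m * inverse u ^ m = 1" "v^m * inverse v ^ m = 1" using assms
    by (simp_all add: inv_pow)
  have "(u^m - v^m) * (u^m - inverse v ^ m) = 0"
  proof -
    have "(u^m - v^m) * (u^m - inverse v ^ m) = u^m*u^m - u^m*(v^m + inverse v ^ m) + v^m * inverse v ^ m"
      by (simp add: algebra_simps)
    also have "\<dots> = 0" using alg3[OF e uw] by simp
    finally show ?thesis .
  qed
  then show ?thesis by auto
qed

lemma core:
  fixes u v :: complex
  assumes "u \<noteq> 0" "v \<noteq> 0" "coprime m1 m2" "m1 \<ge> 1"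
    and h1: "u^m1 = v^m1" and h2: "u^m2 = inverse v ^ m2"
    and ne: "(u + inverse u)/2 \<noteq> (v + inverse v)/2"
  shows "poly (pderiv (cheb_T (m1 * m2))) ((u + inverse u)/2) = 0 \<and>
         poly (pderiv (cheb_T (m1 * m2))) ((v + inverse v)/2) = 0"
proof -
  define n where "n = m1 * m2"
  have iv: "\<And>k. v^k * inverse v ^ k = 1" "\<And>k. u^k * inverse u ^ k = 1" using assms(1,2)
    by (simp_all add: inv_pow)
  have un: "u^n * u^n = 1"
  proof -
    have "u^n * u^n = (u^m1)^m2 * (u^m2)^m1" unfolding n_def by (simp add: power_mult[symmetric] mult.commute)
    also have "\<dots> = (v^m1)^m2 * (inverse v ^ m2)^m1" using h1 h2 by simp
    also have "\<dots> = v^n * inverse v ^ n" unfolding n_def by (simp add: power_mult[symmetric] mult.commute)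
    finally show ?thesis using iv by simp
  qed
  have vn: "v^n * v^n = 1"
  proof -
    have "(v^n * v^n) * (u^m2)^m1 = (v^m1)^m2 * (v^n * (u^m2)^m1)" unfolding n_def
      by (simp add: power_mult[symmetric] mult.commute)
    also have "\<dots> = (u^m1)^m2 * (v^n * inverse v ^ n)" using h1 h2 unfolding n_def
      by (simp add: power_mult[symmetric] mult.commute)
    also have "\<dots> = (u^m2)^m1" using iv unfolding n_def
      by (simp add: power_mult[symmetric] mult.commute)
    finally show ?thesis using assms(1) by simp
  qed
  have "u^n * u^n = u^n * inverse u ^ n" using un iv(2)[of n] by simp
  then have uinv: "u^n = inverse u ^ n" using assms(1) by simp
  have "v^n * v^n = v^n * inverse v ^ n" using vn iv(1)[of n] by simp
  then have vinv: "v^n = inverse v ^ n" using assms(2) by simp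
  have uw: "u \<noteq> inverse u"
  proof
    assume eq: "u = inverse u"
    have e1: "inverse u ^ m1 = u ^ m1" by (simp only: eq[symmetric])
    have e2: "inverse u ^ m1 = inverse v ^ m1" using h1 by (simp add: power_inverse)
    have a1: "(u*v)^m1 = 1" 
    proof -
      have "(u*v)^m1 = u^m1 * v^m1" by (rule power_mult_distrib)
      also have "\<dots> = inverse v ^ m1 * v^m1" using e1 e2 by simp
      finally show ?thesis using iv(1)[of m1] by (simp add: mult.commute)
    qed
    have a2: "(u*v)^m2 = 1"
    proof -
      have "(u*v)^m2 = u^m2 * v^m2" by (rule power_mult_distrib)
      also have "\<dots> = inverse v ^ m2 * v^m2" using h2 by simp
      finally show ?thesis using iv(1)[of m2] by (simp add: mult.commute)
    qed
    have "u*v = 1" using root1[OF assms(3,4) a1 a2] .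
    then have "v = inverse u" using assms(1) by (simp add: field_simps)
    then show False using ne eq by simp
  qed
  have vw: "v \<noteq> inverse v"
  proof
    assume eq: "v = inverse v"
    have e1: "inverse v ^ m2 = v ^ m2" by (simp only: eq[symmetric])
    have a1: "(u * inverse v)^m1 = 1"
    proof -
      have "(u * inverse v)^m1 = u^m1 * inverse v^m1" by (rule power_mult_distrib)
      also have "\<dots> = v^m1 * inverse v ^ m1" using h1 by simp
      finally show ?thesis using iv(1)[of m1] by simp
    qed
    have a2: "(u * inverse v)^m2 = 1"
    proof -
      have "(u * inverse v)^m2 = u^m2 * inverse v^m2" by (rule power_mult_distrib)
      also have "\<dots> = v^m2 * inverse v ^ m2" using h2 e1 by simp
      finally show ?thesis using iv(1)[of m2] by simp
    qed
    have "u * inverse v = 1" using root1[OF assms(3,4) a1 a2] .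
    then have "u = v" using assms(2) by (simp add: field_simps)
    then show False using ne by simp
  qed
  have "poly (pderiv (cheb_T n)) ((u + inverse u)/2) * (u - inverse u) = 0"
    using D_closed[OF assms(1), of n] uinv by simp
  moreover have "poly (pderiv (cheb_T n)) ((v + inverse v)/2) * (v - inverse v) = 0"
    using D_closed[OF assms(2), of n] vinv by simp
  ultimately show ?thesis using uw vw unfolding n_def by simp
qed

theorem corollary2p1:
  fixes m1 m2 :: nat and a b :: complex
  assumes "m1 \<ge> 1" and "m2 \<ge> 1" and "coprime m1 m2"
    and "a \<noteq> b"
    and "poly (cheb_T m1) a = poly (cheb_T m1) b"
    and "poly (cheb_T m2) a = poly (cheb_T m2) b"
  shows "poly (pderiv (cheb_T (m1 * m2))) a = 0 \<and> poly (pderiv (cheb_T (m1 * m2))) b = 0"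
proof -
  obtain u where u: "u \<noteq> 0" "a = (u + inverse u)/2" using param by blast
  obtain v where v: "v \<noteq> 0" "b = (v + inverse v)/2" using param by blast
  have iv: "\<And>k. v^k * inverse v ^ k = 1" using v(1)
    by (simp_all add: inv_pow)
  have c1: "u^m1 = v^m1 \<or> u^m1 = inverse v ^ m1" using split_eq[OF u(1) v(1)] assms(5) u v by simp
  have c2: "u^m2 = v^m2 \<or> u^m2 = inverse v ^ m2" using split_eq[OF u(1) v(1)] assms(6) u v by simp
  have ne: "(u + inverse u)/2 \<noteq> (v + inverse v)/2" using assms(4) u v by simp
  have cop2: "coprime m2 m1" using assms(3) by (simp add: coprime_commute)
  show ?thesis
  proof (cases "u^m1 = v^m1")
    case True
    show ?thesis
    proof (cases "u^m2 = v^m2")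
      case True2: True
      have a1: "(u * inverse v)^m1 = 1" using True iv[of m1] by (simp add: power_mult_distrib)
      have a2: "(u * inverse v)^m2 = 1" using True2 iv[of m2] by (simp add: power_mult_distrib)
      have "u * inverse v = 1" using root1[OF assms(3,1) a1 a2] .
      then have "u = v" using v(1) by (simp add: field_simps)
      then show ?thesis using ne by simp
    next
      case False
      then have "u^m2 = inverse v ^ m2" using c2 by simp
      then show ?thesis unfolding u(2) v(2) using core[OF u(1) v(1) assms(3,1) True _ ne] by simp
    qed
  next
    case False
    then have F1: "u^m1 = inverse v ^ m1" using c1 by simp
    show ?thesis
    proof (cases "u^m2 = v^m2")
      case True2: True
      show ?thesis unfolding u(2) v(2) using core[OF u(1) v(1) cop2 assms(2) True2 F1 ne] by (simp add: mult.commute)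
    next
      case False2: False
      then have F2: "u^m2 = inverse v ^ m2" using c2 by simp
      have a1: "(u * v)^m1 = 1" using F1 iv[of m1] by (simp add: power_mult_distrib mult.commute)
      have a2: "(u * v)^m2 = 1" using F2 iv[of m2] by (simp add: power_mult_distrib mult.commute)
      have "u * v = 1" using root1[OF assms(3,1) a1 a2] .
      then have "v = inverse u" using u(1) by (simp add: field_simps)
      then show ?thesis using ne by (simp add: add.commute)
    qed
  qed
qed

end
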